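(* Let $Y$ be an $n\times n$ matrix each of whose entries is either $0$ or an indeterminate, with distinct nonzero entries being distinct indeterminates over a field $K$, and suppose that the graph $G(Y)$ is a cycle of length $2n$. For $k\ge1$ let $J_k$ be the ideal of $k$-minors of $Y$. Then for all $k<n$, $$J_k=\Big(\prod_{v\in A}v \;:\; A \text{ an independent set of } G(Y) \text{ with } |A|=k\Big).$$
   Context: For a matrix $Z=(z_{ij})$, the graph $G(Z)$ has as vertices the nonzero entries $z_{ij}$, and two vertices $z_{ij},z_{hk}$ are adjacent iff $i=h$ or $j=k$. An independent set is a set of pairwise non-adjacent vertices. *)

theory Defs
  imports "HOL-Library.Poly_Mapping" "Jordan_Normal_Form.Determinant" "Jordan_Normal_Form.DL_Submatrix"
begin

text \<open>Polynomial ring over 'k in the indeterminates x_(i,j), indexed by matrix positions: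
  polynomials are finitely supported maps from monomials (finitely supported exponent
  vectors) to coefficients; multiplication is the convolution product of Poly_Mapping.\<close>
type_synonym 'k mpol = "((nat \<times> nat) \<Rightarrow>\<^sub>0 nat) \<Rightarrow>\<^sub>0 'k"

definition Var :: "nat \<times> nat \<Rightarrow> 'k::comm_ring_1 mpol" where
  "Var v = Poly_Mapping.single (Poly_Mapping.single v 1) 1"

definition Ymat :: "nat \<Rightarrow> (nat \<times> nat) set \<Rightarrow> 'k::comm_ring_1 mpol mat" where
  "Ymat n S = mat n n (\<lambda>(i,j). if (i,j) \<in> S then Var (i,j) else 0)"

definition G_adj :: "(nat \<times> nat) set \<Rightarrow> nat \<times> nat \<Rightarrow> nat \<times> nat \<Rightarrow> bool" where
  "G_adj S p q \<longleftrightarrow> p \<in> S \<and> q \<in> S \<and> p \<noteq> q \<and> (fst p = fst q \<or> snd p = snd q)"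

definition is_cycle_graph :: "'a set \<Rightarrow> ('a \<Rightarrow> 'a \<Rightarrow> bool) \<Rightarrow> nat \<Rightarrow> bool" where
  "is_cycle_graph V E m \<longleftrightarrow> m \<ge> 3 \<and> (\<exists>f. bij_betw f {..<m} V \<and>
     (\<forall>i<m. \<forall>j<m. E (f i) (f j) \<longleftrightarrow> (j = Suc i mod m \<or> i = Suc j mod m)))"

definition independent_set :: "(nat \<times> nat) set \<Rightarrow> (nat \<times> nat) set \<Rightarrow> bool" where
  "independent_set S A \<longleftrightarrow> A \<subseteq> S \<and> (\<forall>p\<in>A. \<forall>q\<in>A. \<not> G_adj S p q)"

definition ideal_gen :: "'a::comm_ring_1 set \<Rightarrow> 'a set" where
  "ideal_gen G = {x. \<exists>F c. finite F \<and> F \<subseteq> G \<and> x = (\<Sum>g\<in>F. c g * g)}"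

definition minors :: "nat \<Rightarrow> 'a::comm_ring_1 mat \<Rightarrow> nat \<Rightarrow> 'a set" where
  "minors n A k = {det (submatrix A I J) | I J.
      I \<subseteq> {..<n} \<and> J \<subseteq> {..<n} \<and> card I = k \<and> card J = k}"

end

theory Submission
  imports Defs
begin

lemma ideal_gen_span:
  "ideal_gen G = Modules.module.span ((*) :: 'a::comm_ring_1 \<Rightarrow> 'a \<Rightarrow> 'a) G"
proof -
  interpret M: Modules.module "(*) :: 'a \<Rightarrow> 'a \<Rightarrow> 'a" by unfold_locales (simp_all add: algebra_simps)
  show ?thesis unfolding ideal_gen_def M.span_explicit by auto
qed

lemma ideal_gen_mono_gen:
  fixes G H :: "'a::comm_ring_1 set"
  assumes "G \<subseteq> ideal_gen H" shows "ideal_gen G \<subseteq> ideal_gen H"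
proof -
  interpret M: Modules.module "(*) :: 'a \<Rightarrow> 'a \<Rightarrow> 'a" by unfold_locales (simp_all add: algebra_simps)
  show ?thesis using assms unfolding ideal_gen_span by (simp add: M.span_minimal)
qed

lemma ideal_gen_base:
  fixes G :: "'a::comm_ring_1 set"
  shows "x \<in> G \<Longrightarrow> c * x \<in> ideal_gen G"
proof -
  interpret M: Modules.module "(*) :: 'a \<Rightarrow> 'a \<Rightarrow> 'a" by unfold_locales (simp_all add: algebra_simps)
  show "x \<in> G \<Longrightarrow> c * x \<in> ideal_gen G" unfolding ideal_gen_span
    by (simp add: M.span_base M.span_scale)
qed

lemma ideal_gen_zero:
  fixes G :: "'a::comm_ring_1 set"
  shows "0 \<in> ideal_gen G"
  unfolding ideal_gen_def by (rule CollectI, rule exI[of _ "{}"]) simp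

lemma cyc_conn:
  assumes cyc: "is_cycle_graph S (G_adj S) m"
  and "E \<subseteq> S" "e \<in> E" and cl: "\<And>x y. x \<in> E \<Longrightarrow> G_adj S x y \<Longrightarrow> y \<in> E"
  shows "E = S"
proof -
  obtain f where m: "m \<ge> 3" and bij: "bij_betw f {..<m} S"
    and adj: "\<forall>i<m. \<forall>j<m. G_adj S (f i) (f j) \<longleftrightarrow> (j = Suc i mod m \<or> i = Suc j mod m)"
    using cyc unfolding is_cycle_graph_def by blast
  obtain a where a: "a < m" "f a = e" using bij \<open>e\<in>E\<close> \<open>E\<subseteq>S\<close> unfolding bij_betw_def by auto
  have step: "f ((a + t) mod m) \<in> E" for t
  proof (induction t)
    case 0 then show ?case using a \<open>e\<in>E\<close> by simp
  next
    case (Suc t)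
    let ?i = "(a+t) mod m"
    have i: "?i < m" using m by simp
    have eq: "Suc ?i mod m = (a + Suc t) mod m" by (simp add: mod_Suc_eq)
    have "Suc ?i mod m < m" using m by simp
    then have "G_adj S (f ?i) (f (Suc ?i mod m))" using adj i by auto
    then show ?case using cl Suc.IH eq by metis
  qed
  show ?thesis
  proof
    show "S \<subseteq> E"
    proof
      fix s assume "s \<in> S"
      then obtain j where j: "j<m" "f j = s" using bij unfolding bij_betw_def by auto
      have "a + (j + m - a) = j + m" using a by simp
      then have "(a + (j + m - a)) mod m = j" using j by simp
      then show "s \<in> E" using step[of "j+m-a"] j by simp
    qed
  qed fact
qed

lemma cyc_deg:
  assumes cyc: "is_cycle_graph S (G_adj S) m"
  and "G_adj S p q" "G_adj S p r" "G_adj S p s" "q\<noteq>r" "q\<noteq>s" "r\<noteq>s"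
  shows False
proof -
  obtain f where m: "m \<ge> 3" and bij: "bij_betw f {..<m} S"
    and adj: "\<forall>i<m. \<forall>j<m. G_adj S (f i) (f j) \<longleftrightarrow> (j = Suc i mod m \<or> i = Suc j mod m)"
    using cyc unfolding is_cycle_graph_def by blast
  have inS: "p \<in> S" "q \<in> S" "r \<in> S" "s \<in> S" using assms unfolding G_adj_def by auto
  have "\<exists>i<m. f i = x" if "x \<in> S" for x using bij that unfolding bij_betw_def by auto
  then obtain i jq jr js where ix: "i<m" "jq<m" "jr<m" "js<m" "f i = p" "f jq = q" "f jr = r" "f js = s"
    using inS by meson
  have d: "jq \<noteq> jr" "jq \<noteq> js" "jr \<noteq> js" using ix assms by auto
  have inj: "\<And>x y. x<m \<Longrightarrow> y<m \<Longrightarrow> Suc x mod m = Suc y mod m \<Longrightarrow> x = y"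
    by (auto simp: mod_if split: if_splits)
  have "jq = Suc i mod m \<or> i = Suc jq mod m" "jr = Suc i mod m \<or> i = Suc jr mod m"
       "js = Suc i mod m \<or> i = Suc js mod m"
    using adj ix assms by auto
  then show False using inj ix d by metis
qed


lemma cyc_card:
  assumes "is_cycle_graph S (G_adj S) m"
  shows "finite S" "card S = m"
proof -
  obtain f where bij: "bij_betw f {..<m} S"
    using assms unfolding is_cycle_graph_def by blast
  show "finite S" using bij bij_betw_finite by blast
  show "card S = m" using bij_betw_same_card[OF bij] by simp
qed

lemma triangle_false:
  assumes cyc: "is_cycle_graph S (G_adj S) (2*n)"
  and adjall: "\<And>u v. u\<in>{p,q,r} \<Longrightarrow> v\<in>{p,q,r} \<Longrightarrow> u\<noteq>v \<Longrightarrow> G_adj S u v"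
  and d: "p\<noteq>q" "p\<noteq>r" "q\<noteq>r"
  shows False
proof -
  have sub: "{p,q,r} \<subseteq> S" using adjall d unfolding G_adj_def by blast
  have "{p,q,r} = S"
  proof (rule cyc_conn[OF cyc sub])
    show "p \<in> {p,q,r}" by simp
    fix x y assume x: "x\<in>{p,q,r}" and xy: "G_adj S x y"
    show "y\<in>{p,q,r}"
    proof (rule ccontr)
      assume y: "y \<notin> {p,q,r}"
      from x show False
      proof (elim insertE)
        assume "x = p" then show False
          using cyc_deg[OF cyc adjall[of p q] adjall[of p r], of y] xy y d by auto
      next
        assume "x = q" then show False
          using cyc_deg[OF cyc adjall[of q p] adjall[of q r], of y] xy y d by auto
      next
        assume "x \<in> {}" then show False by simp
      qed (use cyc_deg[OF cyc adjall[of r p] adjall[of r q], of y] xy y d in auto)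
    qed
  qed
  then have "card S = 3" using d by auto
  then show False using cyc_card(2)[OF cyc] by presburger
qed

lemma row2:
  assumes cyc: "is_cycle_graph S (G_adj S) (2*n)"
  and "p\<in>S" "q\<in>S" "r\<in>S" "fst p = fst q" "fst p = fst r" "p\<noteq>q" "p\<noteq>r" "q\<noteq>r"
  shows False
  by (rule triangle_false[OF cyc, of p q r]) (use assms in \<open>auto simp: G_adj_def\<close>)

lemma col2:
  assumes cyc: "is_cycle_graph S (G_adj S) (2*n)"
  and "p\<in>S" "q\<in>S" "r\<in>S" "snd p = snd q" "snd p = snd r" "p\<noteq>q" "p\<noteq>r" "q\<noteq>r"
  shows False
  by (rule triangle_false[OF cyc, of p q r]) (use assms in \<open>auto simp: G_adj_def\<close>)

lemma half_closure:
  assumes cyc: "is_cycle_graph S (G_adj S) (2*n)"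
  and P: "inj_on P {..<k}" and Q: "inj_on Q {..<k}"
  and p: "p permutes {..<k}" and q: "q permutes {..<k}"
  and pS: "\<forall>a<k. (P a, Q (p a)) \<in> S" and qS: "\<forall>a<k. (P a, Q (q a)) \<in> S"
  and a: "a<k" "p a \<noteq> q a" and sa: "G_adj S (P a, Q (p a)) s"
  shows "\<exists>d. d<k \<and> p d \<noteq> q d \<and> (s = (P d, Q (p d)) \<or> s = (P d, Q (q d)))"
proof -
  have sS: "s\<in>S" and ne: "s \<noteq> (P a, Q (p a))" and or: "fst s = P a \<or> snd s = Q (p a)"
    using sa unfolding G_adj_def by auto
  have pa: "p a < k" "q a < k" using permutes_in_image[OF p] permutes_in_image[OF q] a by auto
  from or show ?thesis
  proof
    assume s1: "fst s = P a"
    have "Q (p a) \<noteq> Q (q a)" using inj_onD[OF Q] pa a by auto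
    show ?thesis
    proof (cases "s = (P a, Q (q a))")
      case True then show ?thesis using a by blast
    next
      case False
      have False
        using row2[OF cyc, of "(P a, Q (p a))" "(P a, Q (q a))" s] pS qS a sS s1 ne False
          \<open>Q (p a) \<noteq> Q (q a)\<close> by auto
      then show ?thesis ..
    qed
  next
    assume s2: "snd s = Q (p a)"
    define d where "d = inv_into UNIV q (p a)"
    have qd: "q d = p a" unfolding d_def using permutes_inverses(1)[OF q] by simp
    have dk: "d < k" using permutes_in_image[OF q, of d] qd pa by auto
    have "d \<noteq> a" using qd a by auto
    have pd: "p d \<noteq> q d"
    proof
      assume "p d = q d"
      then have "p d = p a" using qd by simp
      then show False using permutes_inj[OF p] \<open>d \<noteq> a\<close> by (auto dest: injD)
    qed
    have "P d \<noteq> P a" using inj_onD[OF P] dk a \<open>d \<noteq> a\<close> by auto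
    show ?thesis
    proof (cases "s = (P d, Q (q d))")
      case True then show ?thesis using dk pd by blast
    next
      case False
      have False
        using col2[OF cyc, of "(P a, Q (p a))" "(P d, Q (q d))" s] pS qS a dk sS s2 ne False
          \<open>P d \<noteq> P a\<close> qd by auto
      then show ?thesis ..
    qed
  qed
qed

lemma uniq_perm:
  assumes cyc: "is_cycle_graph S (G_adj S) (2*n)"
  and kn: "k<n"
  and P: "inj_on P {..<k}" and Q: "inj_on Q {..<k}"
  and p: "p permutes {..<k}" and q: "q permutes {..<k}"
  and pS: "\<forall>a<k. (P a, Q (p a)) \<in> S" and qS: "\<forall>a<k. (P a, Q (q a)) \<in> S"
  shows "p = q"
proof (rule ccontr)
  assume pq: "p \<noteq> q"
  define Dset where "Dset = {a. a<k \<and> p a \<noteq> q a}"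
  obtain a0 where "p a0 \<noteq> q a0" using pq by blast
  then have a0: "a0 \<in> Dset" unfolding Dset_def
    using permutes_not_in[OF p] permutes_not_in[OF q] by fastforce
  define Eset where "Eset = (\<lambda>a. (P a, Q (p a))) ` Dset \<union> (\<lambda>a. (P a, Q (q a))) ` Dset"
  have "Eset = S"
  proof (rule cyc_conn[OF cyc])
    show "Eset \<subseteq> S" unfolding Eset_def Dset_def using pS qS by auto
    show "(P a0, Q (p a0)) \<in> Eset" unfolding Eset_def using a0 by auto
    fix x y assume x: "x \<in> Eset" and xy: "G_adj S x y"
    from x show "y \<in> Eset" unfolding Eset_def
    proof (elim UnE imageE)
      fix a assume "a \<in> Dset" "x = (P a, Q (p a))"
      then obtain d where "d<k \<and> p d \<noteq> q d \<and> (y = (P d, Q (p d)) \<or> y = (P d, Q (q d)))"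
        using half_closure[OF cyc P Q p q pS qS, of a y] xy unfolding Dset_def by auto
      then show "y \<in> (\<lambda>a. (P a, Q (p a))) ` Dset \<union> (\<lambda>a. (P a, Q (q a))) ` Dset"
        unfolding Dset_def by auto
    next
      fix a assume "a \<in> Dset" "x = (P a, Q (q a))"
      then obtain d where "d<k \<and> q d \<noteq> p d \<and> (y = (P d, Q (q d)) \<or> y = (P d, Q (p d)))"
        using half_closure[OF cyc P Q q p qS pS, of a y] xy unfolding Dset_def by auto
      then show "y \<in> (\<lambda>a. (P a, Q (p a))) ` Dset \<union> (\<lambda>a. (P a, Q (q a))) ` Dset"
        unfolding Dset_def by auto
    qed
  qed
  have "card Dset \<le> k" unfolding Dset_def by (rule order.trans[OF card_mono[of "{..<k}"]]) auto
  have "card Eset \<le> card Dset + card Dset" unfolding Eset_def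
    by (rule order.trans[OF card_Un_le]) (intro add_mono card_image_le; simp add: Dset_def)
  then have "card S \<le> 2*k" using \<open>Eset = S\<close> \<open>card Dset \<le> k\<close> by simp
  then show False using cyc_card(2)[OF cyc] kn by simp
qed


lemma pick_inj: "inj_on (pick I) {..<card I}"
proof (rule inj_onI)
  fix x y assume x: "x \<in> {..<card I}" and y: "y \<in> {..<card I}" and e: "pick I x = pick I y"
  show "x = y"
  proof (rule ccontr)
    assume "x \<noteq> y"
    then have "x < y \<or> y < x" by arith
    then show False using pick_mono_le[of x I y] pick_mono_le[of y I x] x y e by auto
  qed
qed

lemma pick_bij: assumes "finite I" shows "bij_betw (pick I) {..<card I} I"
proof -
  have sub: "pick I ` {..<card I} \<subseteq> I" using pick_in_set_le by auto
  have "card (pick I ` {..<card I}) = card I" using card_image[OF pick_inj] by simp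
  then have "pick I ` {..<card I} = I" using card_subset_eq[OF assms sub] by simp
  then show ?thesis using pick_inj unfolding bij_betw_def by simp
qed

lemma sub_carrier:
  assumes "I \<subseteq> {..<n}" "J \<subseteq> {..<n}" "card I = k" "card J = k"
  shows "submatrix (Ymat n S) I J \<in> carrier_mat k k"
proof -
  have "{i. i < n \<and> i \<in> I} = I" "{i. i < n \<and> i \<in> J} = J" using assms by auto
  then show ?thesis unfolding carrier_mat_def using assms by (simp add: dim_submatrix Ymat_def)
qed

lemma sub_entry:
  assumes "I \<subseteq> {..<n}" "J \<subseteq> {..<n}" "card I = k" "card J = k" "a < k" "b < k"
  shows "submatrix (Ymat n S) I J $$ (a,b) =
    (if (pick I a, pick J b) \<in> S then Var (pick I a, pick J b) else 0)"
proof -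
  have e: "{i. i < n \<and> i \<in> I} = I" "{i. i < n \<and> i \<in> J} = J" using assms by auto
  have "pick I a \<in> I" "pick J b \<in> J" using pick_in_set_le assms by auto
  then have lt: "pick I a < n" "pick J b < n" using assms by auto
  have "submatrix (Ymat n S) I J $$ (a,b) = Ymat n S $$ (pick I a, pick J b)"
    by (rule submatrix_index) (simp_all add: Ymat_def e assms)
  also have "\<dots> = (if (pick I a, pick J b) \<in> S then Var (pick I a, pick J b) else 0)"
    unfolding Ymat_def using lt by simp
  finally show ?thesis .
qed

lemma det_expand:
  assumes "I \<subseteq> {..<n}" "J \<subseteq> {..<n}" "card I = k" "card J = k"
  shows "det (submatrix (Ymat n S) I J :: 'a::comm_ring_1 mpol mat) =
    (\<Sum>p | p permutes {..<k}. signof p *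
       (\<Prod>a<k. if (pick I a, pick J (p a)) \<in> S then Var (pick I a, pick J (p a)) else 0))"
proof -
  have "det (submatrix (Ymat n S) I J :: 'a mpol mat) = (\<Sum>p | p permutes {0..<k}. signof p *
      (\<Prod>a = 0..<k. (submatrix (Ymat n S) I J :: 'a mpol mat) $$ (a, p a)))"
    by (rule det_def'[OF sub_carrier[OF assms]])
  also have "\<dots> = (\<Sum>p | p permutes {..<k}. signof p *
       (\<Prod>a<k. if (pick I a, pick J (p a)) \<in> S then Var (pick I a, pick J (p a)) else 0))"
  proof (rule sum.cong)
    show "{p. p permutes {0..<k}} = {p. p permutes {..<k}}" by (simp add: atLeast0LessThan)
    fix p assume "p \<in> {p. p permutes {..<k}}"
    then have p: "p permutes {..<k}" by simp
    show "signof p * (\<Prod>a = 0..<k. (submatrix (Ymat n S) I J :: 'a mpol mat) $$ (a, p a)) =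
      signof p * (\<Prod>a<k. if (pick I a, pick J (p a)) \<in> S then Var (pick I a, pick J (p a)) else 0)"
      unfolding atLeast0LessThan
    proof (intro arg_cong[where f="\<lambda>x. signof p * x"] prod.cong refl)
      fix a assume "a \<in> {..<k}"
      then have "a < k" "p a < k" using permutes_in_image[OF p] by auto
      then show "(submatrix (Ymat n S) I J :: 'a mpol mat) $$ (a, p a) =
        (if (pick I a, pick J (p a)) \<in> S then Var (pick I a, pick J (p a)) else 0)"
        by (rule sub_entry[OF assms])
    qed
  qed
  finally show ?thesis .
qed


lemma det_one:
  assumes cyc: "is_cycle_graph S (G_adj S) (2*n)" and kn: "k < n"
  and IJ: "I \<subseteq> {..<n}" "J \<subseteq> {..<n}" "card I = k" "card J = k"
  and p0: "p0 permutes {..<k}" and p0S: "\<forall>a<k. (pick I a, pick J (p0 a)) \<in> S"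
  shows "det (submatrix (Ymat n S) I J :: 'a::comm_ring_1 mpol mat) =
    signof p0 * (\<Prod>a<k. Var (pick I a, pick J (p0 a)))"
proof -
  let ?T = "\<lambda>p. signof p *
       (\<Prod>a<k. if (pick I a, pick J (p a)) \<in> S then Var (pick I a, pick J (p a)) else (0::'a mpol))"
  have fin: "finite {p. p permutes {..<k}}" by (rule finite_permutations) simp
  have PI: "inj_on (pick I) {..<k}" "inj_on (pick J) {..<k}" using pick_inj IJ by metis+
  have z: "?T p = 0" if "p \<in> {p. p permutes {..<k}} - {p0}" for p
  proof -
    from that have p: "p permutes {..<k}" "p \<noteq> p0" by auto
    have "\<exists>a<k. (pick I a, pick J (p a)) \<notin> S"
      using uniq_perm[OF cyc kn PI p(1) p0 _ p0S] p(2) by blast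
    then have "(\<Prod>a<k. if (pick I a, pick J (p a)) \<in> S then Var (pick I a, pick J (p a)) else (0::'a mpol)) = 0"
      by (intro prod_zero) auto
    then show ?thesis by simp
  qed
  have "det (submatrix (Ymat n S) I J :: 'a mpol mat) = sum ?T {p. p permutes {..<k}}"
    by (rule det_expand[OF IJ])
  also have "\<dots> = ?T p0 + sum ?T ({p. p permutes {..<k}} - {p0})"
    by (rule sum.remove[OF fin]) (use p0 in simp)
  also have "sum ?T ({p. p permutes {..<k}} - {p0}) = 0" using z by (intro sum.neutral) blast
  also have "?T p0 = signof p0 * (\<Prod>a<k. Var (pick I a, pick J (p0 a)))"
    using p0S by (intro arg_cong[where f="\<lambda>x. signof p0 * x"] prod.cong) auto
  finally show ?thesis by simp
qed

lemma det_zero: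
  assumes IJ: "I \<subseteq> {..<n}" "J \<subseteq> {..<n}" "card I = k" "card J = k"
  and none: "\<not> (\<exists>p. p permutes {..<k} \<and> (\<forall>a<k. (pick I a, pick J (p a)) \<in> S))"
  shows "det (submatrix (Ymat n S) I J :: 'a::comm_ring_1 mpol mat) = 0"
proof -
  have "det (submatrix (Ymat n S) I J :: 'a mpol mat) = (\<Sum>p | p permutes {..<k}. signof p *
       (\<Prod>a<k. if (pick I a, pick J (p a)) \<in> S then Var (pick I a, pick J (p a)) else 0))"
    by (rule det_expand[OF IJ])
  also have "\<dots> = 0"
  proof (intro sum.neutral ballI)
    fix p assume "p \<in> {p. p permutes {..<k}}"
    then have "\<exists>a<k. (pick I a, pick J (p a)) \<notin> S" using none by auto
    then have "(\<Prod>a<k. if (pick I a, pick J (p a)) \<in> S then Var (pick I a, pick J (p a)) else (0::'a mpol)) = 0"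
      by (intro prod_zero) auto
    then show "signof p * (\<Prod>a<k. if (pick I a, pick J (p a)) \<in> S then Var (pick I a, pick J (p a)) else (0::'a mpol)) = 0"
      by simp
  qed
  finally show ?thesis .
qed


theorem lemma8p2:
  fixes n k :: nat and S :: "(nat \<times> nat) set"
  assumes "S \<subseteq> {..<n} \<times> {..<n}"
    and "is_cycle_graph S (G_adj S) (2 * n)"
    and "1 \<le> k" and "k < n"
  shows "ideal_gen (minors n (Ymat n S :: 'k::field mpol mat) k)
       = ideal_gen {(\<Prod>v\<in>A. Var v) | A. independent_set S A \<and> card A = k}"
proof -
  note cyc = assms(2) and kn = assms(4)
  let ?Y = "Ymat n S :: 'k mpol mat"
  let ?M = "minors n ?Y k"
  let ?G = "{(\<Prod>v\<in>A. Var v) | A. independent_set S A \<and> card A = k} :: 'k mpol set"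
  have 1: "?M \<subseteq> ideal_gen ?G"
  proof
    fix x assume "x \<in> ?M"
    then obtain I J where IJ: "I \<subseteq> {..<n}" "J \<subseteq> {..<n}" "card I = k" "card J = k"
      and x: "x = det (submatrix ?Y I J)" unfolding minors_def by blast
    show "x \<in> ideal_gen ?G"
    proof (cases "\<exists>p. p permutes {..<k} \<and> (\<forall>a<k. (pick I a, pick J (p a)) \<in> S)")
      case True
      then obtain p0 where p0: "p0 permutes {..<k}" and p0S: "\<forall>a<k. (pick I a, pick J (p0 a)) \<in> S"
        by blast
      have PI: "inj_on (pick I) {..<k}" "inj_on (pick J) {..<k}" using pick_inj IJ by metis+
      have p0k: "\<And>a. a < k \<Longrightarrow> p0 a < k" using permutes_in_image[OF p0] by simp
      have p0inj: "\<And>a b. p0 a = p0 b \<Longrightarrow> a = b" using permutes_inj[OF p0] by (auto dest: injD)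
      define A where "A = (\<lambda>a. (pick I a, pick J (p0 a))) ` {..<k}"
      have injA: "inj_on (\<lambda>a. (pick I a, pick J (p0 a))) {..<k}"
      proof (rule inj_onI)
        fix a b assume a: "a \<in> {..<k}" and b: "b \<in> {..<k}"
          and e: "(pick I a, pick J (p0 a)) = (pick I b, pick J (p0 b))"
        then have "pick I a = pick I b" by simp
        then show "a = b" by (rule inj_onD[OF PI(1) _ a b])
      qed
      have prodA: "(\<Prod>v\<in>A. (Var v :: 'k mpol)) = (\<Prod>a<k. Var (pick I a, pick J (p0 a)))"
        unfolding A_def using prod.reindex[OF injA, of Var] by (simp add: comp_def)
      have indep: "independent_set S A"
        unfolding independent_set_def
      proof (intro conjI ballI)
        show "A \<subseteq> S" unfolding A_def using p0S by auto
        fix u v assume "u \<in> A" "v \<in> A"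
        then obtain a b where ab: "a<k" "b<k" "u = (pick I a, pick J (p0 a))" "v = (pick I b, pick J (p0 b))"
          unfolding A_def by auto
        show "\<not> G_adj S u v"
        proof (cases "a = b")
          case True then show ?thesis using ab unfolding G_adj_def by simp
        next
          case False
          have "pick I a \<noteq> pick I b"
          proof
            assume "pick I a = pick I b"
            then have "a = b" by (rule inj_onD[OF PI(1)]) (use ab in auto)
            then show False using False by simp
          qed
          moreover have "pick J (p0 a) \<noteq> pick J (p0 b)"
          proof
            assume "pick J (p0 a) = pick J (p0 b)"
            then have "p0 a = p0 b" by (rule inj_onD[OF PI(2)]) (use ab p0k in auto)
            then have "a = b" by (rule p0inj)
            then show False using False by simp
          qed
          ultimately show ?thesis using ab unfolding G_adj_def by simp
        qed
      qed
      have cardA: "card A = k" unfolding A_def using card_image[OF injA] by simp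
      have "det (submatrix ?Y I J) = signof p0 * (\<Prod>a<k. Var (pick I a, pick J (p0 a)))"
        by (rule det_one[OF cyc kn IJ p0 p0S])
      then have xe: "x = signof p0 * (\<Prod>v\<in>A. Var v)"
        unfolding x prodA .
      moreover have "(\<Prod>v\<in>A. Var v) \<in> ?G" using indep cardA by blast
      ultimately show ?thesis by (simp add: ideal_gen_base)
    next
      case False
      have "det (submatrix ?Y I J) = 0" by (rule det_zero[OF IJ False])
      then have "x = 0" using x by simp
      then show ?thesis using ideal_gen_zero by simp
    qed
  qed
  have 2: "?G \<subseteq> ideal_gen ?M"
  proof
    fix y assume "y \<in> ?G"
    then obtain A where A: "independent_set S A" "card A = k" and y: "y = (\<Prod>v\<in>A. Var v)" by blast
    have AS: "A \<subseteq> S" using A unfolding independent_set_def by simp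
    have finA: "finite A" using AS cyc_card(1)[OF cyc] finite_subset by blast
    have nadj: "fst u \<noteq> fst v \<and> snd u \<noteq> snd v" if "u\<in>A" "v\<in>A" "u \<noteq> v" for u v
      using A that AS unfolding independent_set_def G_adj_def by blast
    have injf: "inj_on fst A" using nadj by (meson inj_onI)
    have injs: "inj_on snd A" using nadj by (meson inj_onI)
    define I where "I = fst ` A"
    define J where "J = snd ` A"
    have IJ: "I \<subseteq> {..<n}" "J \<subseteq> {..<n}" "card I = k" "card J = k"
      using AS assms(1) A(2) card_image[OF injf] card_image[OF injs] unfolding I_def J_def by auto
    have finJ: "finite J" using IJ(2) finite_subset by blast
    have bf: "bij_betw fst A I" using injf unfolding bij_betw_def I_def by simp
    define r where "r = inv_into A fst"
    have rb: "bij_betw r I A" unfolding r_def by (rule bij_betw_inv_into[OF bf])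
    have rA1: "r i \<in> A" if "i \<in> I" for i
      unfolding r_def by (rule inv_into_into) (use that in \<open>simp add: I_def\<close>)
    have rA2: "fst (r i) = i" if "i \<in> I" for i
      unfolding r_def by (rule f_inv_into_f) (use that in \<open>simp add: I_def\<close>)
    note rA = rA1 rA2
    have finI: "finite I" unfolding I_def using finA by simp
    have PIb: "bij_betw (pick I) {..<k} I" using pick_bij[OF finI] IJ(3) by simp
    have PI: "pick I a \<in> I" if "a < k" for a using PIb that unfolding bij_betw_def by auto
    define p0 where "p0 = (\<lambda>a. if a < k then card {b\<in>J. b < snd (r (pick I a))} else a)"
    have sJ: "snd (r (pick I a)) \<in> J" if "a<k" for a using rA(1)[OF PI[OF that]] unfolding J_def by auto
    have pJ: "pick J (p0 a) = snd (r (pick I a))" if "a<k" for a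
      unfolding p0_def using that pick_card_in_set[OF sJ[OF that]] by simp
    have p0k: "p0 a < k" if "a<k" for a
    proof -
      have "{b\<in>J. b < snd (r (pick I a))} \<subset> J" using sJ[OF that] by auto
      then show ?thesis using psubset_card_mono[OF finJ] IJ(4) that unfolding p0_def by auto
    qed
    have pair: "(pick I a, pick J (p0 a)) = r (pick I a)" if "a<k" for a
      using pJ[OF that] rA(2)[OF PI[OF that]] by (simp add: prod_eq_iff)
    have p0S: "\<forall>a<k. (pick I a, pick J (p0 a)) \<in> S"
    proof (intro allI impI)
      fix a assume "a < k"
      then have "r (pick I a) \<in> A" using rA1 PI by blast
      then show "(pick I a, pick J (p0 a)) \<in> S" using pair[OF \<open>a<k\<close>] AS by auto
    qed
    have injp0: "inj_on p0 {..<k}"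
    proof (rule inj_onI)
      fix a b assume a: "a \<in> {..<k}" and b: "b \<in> {..<k}" and e: "p0 a = p0 b"
      then have "snd (r (pick I a)) = snd (r (pick I b))" using pJ[of a] pJ[of b] by simp
      moreover have "r (pick I a) \<in> A" "r (pick I b) \<in> A" using rA(1) PI a b by auto
      ultimately have "r (pick I a) = r (pick I b)" by (rule inj_onD[OF injs])
      then have eqP: "pick I a = pick I b" using rA(2) PI a b by (metis lessThan_iff)
      have PIinj: "inj_on (pick I) {..<k}" using PIb by (rule bij_betw_imp_inj_on)
      show "a = b" by (rule inj_onD[OF PIinj eqP a b])
    qed
    have sub0: "p0 ` {..<k} \<subseteq> {..<k}"
    proof (rule image_subsetI)
      fix a assume "a \<in> {..<k}"
      then show "p0 a \<in> {..<k}" using p0k by simp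
    qed
    have im: "p0 ` {..<k} = {..<k}" by (rule endo_inj_surj[OF finite_lessThan sub0 injp0])
    have bp0: "bij_betw p0 {..<k} {..<k}" unfolding bij_betw_def using injp0 im by (rule conjI)
    have stab: "p0 x = x" if "x \<notin> {..<k}" for x using that by (simp add: p0_def)
    have p0: "p0 permutes {..<k}" using bij_imp_permutes[OF bp0 stab] .
    have rPb: "bij_betw (\<lambda>a. r (pick I a)) {..<k} A"
      using bij_betw_trans[OF PIb rb] by (simp add: comp_def)
    have "(\<Prod>a<k. Var (pick I a, pick J (p0 a))) = (\<Prod>a<k. (Var (r (pick I a)) :: 'k mpol))"
      using pair by (intro prod.cong) auto
    also have "\<dots> = (\<Prod>v\<in>A. Var v)" by (rule prod.reindex_bij_betw[OF rPb])
    moreover have "det (submatrix ?Y I J) = signof p0 * (\<Prod>a<k. Var (pick I a, pick J (p0 a)))"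
      by (rule det_one[OF cyc kn IJ p0 p0S])
    ultimately have "det (submatrix ?Y I J) = signof p0 * y"
      using y by simp
    then have e1: "signof p0 * det (submatrix ?Y I J) = (signof p0 * signof p0) * y" by (metis mult.assoc)
    have e2: "signof p0 * signof p0 = (1 :: 'k mpol)" using signof_pm_one[of p0, where 'a="'k mpol"] by auto
    have yeq: "y = signof p0 * det (submatrix ?Y I J)" unfolding e1 e2 by simp
    have "det (submatrix ?Y I J) \<in> ?M" unfolding minors_def using IJ by blast
    then show "y \<in> ideal_gen ?M" using yeq ideal_gen_base by metis
  qed
  show ?thesis
    using ideal_gen_mono_gen[OF 1] ideal_gen_mono_gen[OF 2] by (rule subset_antisym)
qed

end
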